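(* A $\tau$-equivariant polynomial automorphism of $\mathcal{D}$ extends uniquely to a polynomial automorphism of $\mathcal{M}(2;\mathbb{C})$ compatible with conjugation.
   Context: $\mathcal{D}$ is the set of diagonal $2\times2$ complex matrices, identified with $\mathbb{C}^2$ via $\mathrm{diag}(\lambda_1,\lambda_2)\mapsto(\lambda_1,\lambda_2)$; $\tau(\lambda_1,\lambda_2)=(\lambda_2,\lambda_1)$, and $\tau$-equivariant means commuting with $\tau$. A map $\Phi$ of $\mathcal{M}(2;\mathbb{C})$ is compatible with conjugation if $\mathrm{A}\Phi(\mathrm{M})\mathrm{A}^{-1}=\Phi(\mathrm{A}\mathrm{M}\mathrm{A}^{-1})$ for all $\mathrm{A}\in\mathrm{GL}(2;\mathbb{C})$; the extension restricts to the given automorphism on $\mathcal{D}$. *)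

theory Defs
  imports "HOL-Analysis.Analysis"
begin

inductive_set vec_polyfun :: "(complex^'n \<Rightarrow> complex) set" where
  const: "(\<lambda>x. c) \<in> vec_polyfun"
| coord: "(\<lambda>x. x $ i) \<in> vec_polyfun"
| add: "f \<in> vec_polyfun \<Longrightarrow> g \<in> vec_polyfun \<Longrightarrow> (\<lambda>x. f x + g x) \<in> vec_polyfun"
| mult: "f \<in> vec_polyfun \<Longrightarrow> g \<in> vec_polyfun \<Longrightarrow> (\<lambda>x. f x * g x) \<in> vec_polyfun"

inductive_set mat_polyfun :: "(complex^'n^'m \<Rightarrow> complex) set" where
  const: "(\<lambda>M. c) \<in> mat_polyfun"
| coord: "(\<lambda>M. M $ i $ j) \<in> mat_polyfun"
| add: "f \<in> mat_polyfun \<Longrightarrow> g \<in> mat_polyfun \<Longrightarrow> (\<lambda>M. f M + g M) \<in> mat_polyfun"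
| mult: "f \<in> mat_polyfun \<Longrightarrow> g \<in> mat_polyfun \<Longrightarrow> (\<lambda>M. f M * g M) \<in> mat_polyfun"

definition vec_polymap :: "(complex^'n \<Rightarrow> complex^'m) \<Rightarrow> bool" where
  "vec_polymap F \<longleftrightarrow> (\<forall>j. (\<lambda>x. F x $ j) \<in> vec_polyfun)"

definition mat_polymap :: "(complex^'n^'m \<Rightarrow> complex^'n^'m) \<Rightarrow> bool" where
  "mat_polymap F \<longleftrightarrow> (\<forall>i j. (\<lambda>M. F M $ i $ j) \<in> mat_polyfun)"

definition vec_polyaut :: "(complex^'n \<Rightarrow> complex^'n) \<Rightarrow> bool" where
  "vec_polyaut F \<longleftrightarrow> bij F \<and> vec_polymap F \<and> vec_polymap (inv F)"

definition mat_polyaut :: "(complex^'n^'m \<Rightarrow> complex^'n^'m) \<Rightarrow> bool" where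
  "mat_polyaut F \<longleftrightarrow> bij F \<and> mat_polymap F \<and> mat_polymap (inv F)"

text \<open>Identification C^2 = D: (l1,l2) maps to diag(l1,l2).\<close>
definition diag2 :: "complex^2 \<Rightarrow> complex^2^2" where
  "diag2 v = (\<chi> i j. if i = j then v $ i else 0)"

definition tau :: "complex^2 \<Rightarrow> complex^2" where
  "tau v = (\<chi> i. if i = 1 then v $ 2 else v $ 1)"

end

theory Submission
  imports Defs
begin
lemma t1: "(2::2) \<noteq> 1" by simp
definition m2 :: "complex \<Rightarrow> complex \<Rightarrow> complex \<Rightarrow> complex \<Rightarrow> complex^2^2" where
  "m2 a b c d = (\<chi> i j. if i = 1 then (if j = 1 then a else b) else (if j = 1 then c else d))"
lemma m2_nth[simp]: "m2 a b c d $ 1 $ 1 = a" "m2 a b c d $ 1 $ 2 = b" "m2 a b c d $ 2 $ 1 = c" "m2 a b c d $ 2 $ 2 = d"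
  by (simp_all add: m2_def)
lemma m2_eta: "M = m2 (M$1$1) (M$1$2) (M$2$1) (M$2$2)"
  by (simp add: vec_eq_iff forall_2)
lemma m2_mult[simp]: "m2 a b c d ** m2 e f g h = m2 (a*e+b*g) (a*f+b*h) (c*e+d*g) (c*f+d*h)"
  by (simp add: vec_eq_iff forall_2 matrix_matrix_mult_def sum_2)
lemma m2_add[simp]: "m2 a b c d + m2 e f g h = m2 (a+e) (b+f) (c+g) (d+h)"
  by (simp add: vec_eq_iff forall_2)
lemma m2_diff[simp]: "m2 a b c d - m2 e f g h = m2 (a-e) (b-f) (c-g) (d-h)"
  by (simp add: vec_eq_iff forall_2)
lemma m2_eq[simp]: "m2 a b c d = m2 e f g h \<longleftrightarrow> a = e \<and> b = f \<and> c = g \<and> d = h"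
  by (metis m2_nth)
lemma mat_m2: "mat k = m2 k 0 0 k"
  by (simp add: vec_eq_iff forall_2 mat_def)
lemma diag2_m2: "diag2 v = m2 (v$1) 0 0 (v$2)"
  by (simp add: vec_eq_iff forall_2 diag2_def)
lemma det_m2[simp]: "det (m2 a b c d) = a*d - b*c"
  by (simp add: det_2)
lemma trace_m2[simp]: "trace (m2 a b c d) = a + d"
  by (simp add: trace_def sum_2)
lemma tau_nth[simp]: "tau v $ 1 = v $ 2" "tau v $ 2 = v $ 1"
  by (simp_all add: tau_def)
lemma inv_props: assumes "invertible (A::complex^2^2)"
  shows "A ** matrix_inv A = mat 1" "matrix_inv A ** A = mat 1"
proof -
  have "\<exists>A'. A ** A' = mat 1 \<and> A' ** A = mat 1" using assms by (simp add: invertible_def)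
  from someI_ex[OF this] show "A ** matrix_inv A = mat 1" "matrix_inv A ** A = mat 1"
    by (simp_all add: matrix_inv_def)
qed
definition equivc :: "(complex^2^2 \<Rightarrow> complex^2^2) \<Rightarrow> bool" where
  "equivc F \<longleftrightarrow> (\<forall>A M. invertible A \<longrightarrow> A ** F M ** matrix_inv A = F (A ** M ** matrix_inv A))"

lemma mpf_diff: "f \<in> mat_polyfun \<Longrightarrow> g \<in> mat_polyfun \<Longrightarrow> (\<lambda>M. f M - g M) \<in> mat_polyfun"
proof -
  assume f: "f \<in> mat_polyfun" and g: "g \<in> mat_polyfun"
  have "(\<lambda>M. (-1) * g M) \<in> mat_polyfun" by (rule mat_polyfun.mult[OF mat_polyfun.const g])
  from mat_polyfun.add[OF f this] show ?thesis by simp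
qed

lemma mpf_neg: "f \<in> mat_polyfun \<Longrightarrow> (\<lambda>M. - f M) \<in> mat_polyfun"
  using mpf_diff[OF mat_polyfun.const[of 0]] by simp
lemma trace2: "trace (M::complex^2^2) = M$1$1 + M$2$2"
  by (simp add: trace_def sum_2)

lemma mpf_m2: "(\<lambda>M. a M) \<in> mat_polyfun \<Longrightarrow> (\<lambda>M. b M) \<in> mat_polyfun \<Longrightarrow> (\<lambda>M. c M) \<in> mat_polyfun
  \<Longrightarrow> (\<lambda>M. d M) \<in> mat_polyfun \<Longrightarrow> mat_polymap (\<lambda>M. m2 (a M) (b M) (c M) (d M))"
  unfolding mat_polymap_def
  apply (intro allI)
  subgoal for i j using exhaust_2[of i] exhaust_2[of j] by auto
  done

lemma polymap_nth: "mat_polymap F \<Longrightarrow> (\<lambda>M. F M $ i $ j) \<in> mat_polyfun"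
  by (simp add: mat_polymap_def)

lemma equivc_mult: assumes "equivc F" "equivc G" shows "equivc (\<lambda>M. F M ** G M)"
  unfolding equivc_def
proof (intro allI impI)
  fix A M :: "complex^2^2" assume A: "invertible A"
  have "A ** (F M ** G M) ** matrix_inv A = (A ** F M ** matrix_inv A) ** (A ** G M ** matrix_inv A)"
  proof -
    have "(A ** F M ** matrix_inv A) ** (A ** G M ** matrix_inv A)
        = A ** F M ** (matrix_inv A ** A) ** G M ** matrix_inv A"
      by (simp add: matrix_mul_assoc)
    also have "\<dots> = A ** (F M ** G M) ** matrix_inv A"
      by (simp add: inv_props(2)[OF A] matrix_mul_assoc)
    finally show ?thesis by simp
  qed
  then show "A ** (F M ** G M) ** matrix_inv A = F (A ** M ** matrix_inv A) ** G (A ** M ** matrix_inv A)"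
    using assms A by (simp add: equivc_def)
qed

lemma radd: "((X::complex^2^2) + Y) ** B = X ** B + Y ** B"
  by (simp add: vec_eq_iff matrix_matrix_mult_def sum.distrib distrib_right)
lemma rdiff: "((X::complex^2^2) - Y) ** B = X ** B - Y ** B"
  by (simp add: vec_eq_iff matrix_matrix_mult_def sum_subtractf left_diff_distrib)
lemma ldiff: "(A::complex^2^2) ** (X - Y) = A ** X - A ** Y"
  by (simp add: vec_eq_iff matrix_matrix_mult_def sum_subtractf right_diff_distrib)
lemma sandwich_add: "(A::complex^2^2) ** (X + Y) ** (B::complex^2^2) = A ** X ** B + A ** Y ** B"
  by (simp add: matrix_add_ldistrib radd)

lemma sandwich_diff: "(A::complex^2^2) ** (X - Y) ** (B::complex^2^2) = A ** X ** B - A ** Y ** B"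
  by (simp add: ldiff rdiff)

lemma mat_comm: "(A::complex^2^2) ** mat c = mat c ** A"
  by (subst (1 2) m2_eta) (simp add: mat_m2 algebra_simps)

lemma sandwich_mat: "invertible A \<Longrightarrow> (A::complex^2^2) ** mat c ** matrix_inv A = mat c"
  by (simp add: mat_comm flip: matrix_mul_assoc) (simp add: inv_props)

lemma trace_sandwich: "invertible A \<Longrightarrow> trace ((A::complex^2^2) ** M ** matrix_inv A) = trace M"
  by (metis trace_mul_sym matrix_mul_assoc inv_props(2) matrix_mul_lid)

lemma ext_exists:
  assumes "f \<in> vec_polyfun"
  shows "\<exists>F. mat_polymap F \<and> equivc F \<and> (\<forall>v. F (diag2 v) = m2 (f v) 0 0 (f (tau v)))"
  using assms
proof induction
  case (const c)
  show ?case
    apply (rule exI[of _ "\<lambda>M. mat c"])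
    apply (intro conjI)
    subgoal by (simp add: mat_m2) (rule mpf_m2; rule mat_polyfun.const)
    subgoal by (simp add: equivc_def sandwich_mat)
    subgoal by (simp add: mat_m2 diag2_m2)
    done
next
  case (coord i)
  show ?case
  proof (cases "i = 1")
    case True
    show ?thesis
      apply (rule exI[of _ "\<lambda>M. M"])
      apply (simp add: True equivc_def diag2_m2 mat_polymap_def mat_polyfun.coord)
      done
  next
    case False
    then have i: "i = 2" using exhaust_2 by blast
    show ?thesis
      apply (rule exI[of _ "\<lambda>M. mat (trace M) - M"])
      apply (intro conjI)
      subgoal
        apply (subst m2_eta[of "mat _ - _"])
        apply (simp add: mat_m2 trace2)
        apply (intro mpf_m2 mpf_diff mpf_neg mat_polyfun.add mat_polyfun.coord mat_polyfun.const)
        done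
      subgoal by (simp add: equivc_def sandwich_diff sandwich_mat trace_sandwich)
      subgoal by (simp add: i diag2_m2 mat_m2)
      done
  qed
next
  case (add f g)
  then obtain F G where F: "mat_polymap F" "equivc F" "\<forall>v. F (diag2 v) = m2 (f v) 0 0 (f (tau v))"
    and G: "mat_polymap G" "equivc G" "\<forall>v. G (diag2 v) = m2 (g v) 0 0 (g (tau v))" by blast
  show ?case
    apply (rule exI[of _ "\<lambda>M. F M + G M"])
    using F G
    apply (simp add: equivc_def sandwich_add mat_polymap_def mat_polyfun.add)
    done
next
  case (mult f g)
  then obtain F G where F: "mat_polymap F" "equivc F" "\<forall>v. F (diag2 v) = m2 (f v) 0 0 (f (tau v))"
    and G: "mat_polymap G" "equivc G" "\<forall>v. G (diag2 v) = m2 (g v) 0 0 (g (tau v))" by blast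
  show ?case
    apply (rule exI[of _ "\<lambda>M. F M ** G M"])
    apply (intro conjI)
    subgoal
    proof -
      have e: "F M ** G M = m2 (F M$1$1 * G M$1$1 + F M$1$2 * G M$2$1) (F M$1$1 * G M$1$2 + F M$1$2 * G M$2$2)
          (F M$2$1 * G M$1$1 + F M$2$2 * G M$2$1) (F M$2$1 * G M$1$2 + F M$2$2 * G M$2$2)" for M
        by (subst m2_eta[of "F M"], subst m2_eta[of "G M"]) (simp only: m2_mult m2_nth)
      show ?thesis
        apply (simp only: e)
        apply (intro mpf_m2 mat_polyfun.add mat_polyfun.mult polymap_nth F(1) G(1))
        done
    qed
    subgoal by (rule equivc_mult[OF F(2) G(2)])
    subgoal using F G by simp
    done
qed


lemma mpf_tendsto:
  assumes "f \<in> mat_polyfun" "\<And>i j. (\<lambda>n. X n $ i $ j) \<longlonglongrightarrow> M $ i $ j"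
  shows "(\<lambda>n. f (X n)) \<longlonglongrightarrow> f M"
  using assms(1)
proof induction
  case (const c) then show ?case by simp
next
  case (coord i j) then show ?case using assms(2) by simp
next
  case (add f g) then show ?case by (intro tendsto_intros)
next
  case (mult f g) then show ?case by (intro tendsto_intros)
qed

lemma conj_rep:
  assumes "invertible (P::complex^2^2)" "M ** P = P ** T"
  shows "M = P ** T ** matrix_inv P"
proof -
  have "P ** T ** matrix_inv P = M ** (P ** matrix_inv P)" by (simp add: assms(2) matrix_mul_assoc)
  then show ?thesis by (simp add: inv_props[OF assms(1)])
qed

lemma equivc_rep:
  assumes "equivc F" "invertible (P::complex^2^2)" "M ** P = P ** T"
  shows "F M = P ** F T ** matrix_inv P"
  using assms conj_rep[OF assms(2,3)] unfolding equivc_def by metis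

lemma agree:
  assumes F: "mat_polymap F" "equivc F" and G: "mat_polymap G" "equivc G"
    and D: "\<forall>v. F (diag2 v) = G (diag2 v)"
  shows "F = G"
proof -
  have s1: "F (m2 x b 0 y) = G (m2 x b 0 y)" if xy: "x \<noteq> y" for x b y
  proof -
    let ?P = "m2 1 b 0 (y - x)" and ?T = "m2 x 0 0 y"
    have inv: "invertible ?P" using xy by (simp add: invertible_det_nz)
    have e: "m2 x b 0 y ** ?P = ?P ** ?T" by (simp add: algebra_simps)
    have Td: "?T = diag2 (\<chi> i. if i = 1 then x else y)" by (simp add: diag2_m2)
    show ?thesis
      using equivc_rep[OF F(2) inv e] equivc_rep[OF G(2) inv e] D Td by simp
  qed
  have s2: "F (m2 x b 0 y) = G (m2 x b 0 y)" for x b y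
  proof (cases "x = y")
    case False then show ?thesis by (rule s1)
  next
    case True
    define X where "X n = m2 (x + of_real (inverse (real (Suc n)))) b 0 y" for n
    have XF: "F (X n) = G (X n)" for n
    proof -
      have "(1::complex) + of_nat n \<noteq> 0" by (metis of_nat_Suc of_nat_eq_0_iff nat.distinct(1))
      then show ?thesis unfolding X_def by (intro s1) (simp add: True)
    qed
    have lim0: "(\<lambda>n. x + complex_of_real (inverse (real (Suc n)))) \<longlonglongrightarrow> x"
      using tendsto_add[OF tendsto_const tendsto_of_real[OF LIMSEQ_inverse_real_of_nat], of x] by simp
    have lim: "(\<lambda>n. X n $ i $ j) \<longlonglongrightarrow> m2 x b 0 y $ i $ j" for i j
      using exhaust_2[of i] exhaust_2[of j] lim0 by (auto simp: X_def)
    show ?thesis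
    proof (subst vec_eq_iff, intro allI, subst vec_eq_iff, intro allI)
      fix i j
      have "(\<lambda>n. F (X n) $ i $ j) \<longlonglongrightarrow> F (m2 x b 0 y) $ i $ j"
        by (rule mpf_tendsto[OF polymap_nth[OF F(1)] lim])
      moreover have "(\<lambda>n. F (X n) $ i $ j) \<longlonglongrightarrow> G (m2 x b 0 y) $ i $ j"
        unfolding XF by (rule mpf_tendsto[OF polymap_nth[OF G(1)] lim])
      ultimately show "F (m2 x b 0 y) $ i $ j = G (m2 x b 0 y) $ i $ j" by (rule LIMSEQ_unique)
    qed
  qed
  show ?thesis
  proof
    fix M :: "complex^2^2"
    define a b c d where "a = M$1$1" "b = M$1$2" "c = M$2$1" "d = M$2$2"
    have M: "M = m2 a b c d" unfolding a_b_c_d_def by (rule m2_eta)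
    show "F M = G M"
    proof (cases "c = 0")
      case True then show ?thesis using s2 M by simp
    next
      case False
      define s p where "s = a + d" "p = a * d - b * c"
      define l where "l = (s + csqrt (s^2 - 4*p)) / 2"
      have r: "(csqrt (s^2 - 4*p))^2 = s^2 - 4*p" by (rule power2_csqrt)
      define w where "w = csqrt (s^2 - 4*p)"
      have r': "w*w = s * s - 4*p" using r unfolding w_def by (simp add: power2_eq_square)
      have lw: "l = (s + w) / 2" unfolding l_def w_def ..
      have h1: "4*(l*l) = s * s + 2 * s * w + w*w" unfolding lw by (simp add: field_simps)
      have h2: "4 * (s * l - p) = 2 * s * s + 2 * s * w - 4*p" unfolding lw by (simp add: field_simps)
      have "4*(l*l) = 4 * (s * l - p)" using h1 h2 r' by simp
      then have q: "l * l = s * l - p" by (simp only: mult_cancel_left) simp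
      let ?P = "m2 (l - d) 1 c 0" and ?T = "m2 l 1 0 (a + d - l)"
      have inv: "invertible ?P" using False by (simp add: invertible_det_nz)
      have q2: "a * (l - d) + b * c = (l - d) * l"
        using q unfolding s_p_def by (simp add: algebra_simps)
      have e: "M ** ?P = ?P ** ?T" using q2 unfolding M by (simp add: algebra_simps)
      show ?thesis
        using equivc_rep[OF F(2) inv e] equivc_rep[OF G(2) inv e] s2 by simp
    qed
  qed
qed


lemma mpf_comp: "g \<in> mat_polyfun \<Longrightarrow> mat_polymap \<Phi> \<Longrightarrow> (\<lambda>M. g (\<Phi> M)) \<in> mat_polyfun"
proof (induction rule: mat_polyfun.induct)
  case (const c) then show ?case by (simp add: mat_polyfun.const)
next
  case (coord i j) then show ?case by (simp add: mat_polymap_def)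
next
  case (add f g) then show ?case by (simp add: mat_polyfun.add)
next
  case (mult f g) then show ?case by (simp add: mat_polyfun.mult)
qed

lemma polymap_comp: "mat_polymap \<Phi> \<Longrightarrow> mat_polymap \<Psi> \<Longrightarrow> mat_polymap (\<lambda>M. \<Psi> (\<Phi> M))"
  unfolding mat_polymap_def[of "\<lambda>M. \<Psi> (\<Phi> M)"]
  by (auto intro: mpf_comp[OF polymap_nth])

lemma polymap_id: "mat_polymap (\<lambda>M. M)"
  by (simp add: mat_polymap_def mat_polyfun.coord)

lemma equivc_comp: "equivc \<Phi> \<Longrightarrow> equivc \<Psi> \<Longrightarrow> equivc (\<lambda>M. \<Psi> (\<Phi> M))"
  unfolding equivc_def by metis

lemma equivc_id: "equivc (\<lambda>M. M)"
  unfolding equivc_def by simp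

lemma ext_map:
  assumes "vec_polymap \<psi>" "\<forall>v. \<psi> (tau v) = tau (\<psi> v)"
  shows "\<exists>\<Psi>. mat_polymap \<Psi> \<and> equivc \<Psi> \<and> (\<forall>v. \<Psi> (diag2 v) = diag2 (\<psi> v))"
proof -
  have "(\<lambda>v. \<psi> v $ 1) \<in> vec_polyfun" using assms(1) by (simp add: vec_polymap_def)
  from ext_exists[OF this] obtain \<Psi> where
    P: "mat_polymap \<Psi>" "equivc \<Psi>" "\<forall>v. \<Psi> (diag2 v) = m2 (\<psi> v $ 1) 0 0 (\<psi> (tau v) $ 1)" by blast
  have "\<psi> (tau v) $ 1 = \<psi> v $ 2" for v using assms(2) by simp
  then show ?thesis using P by (auto simp: diag2_m2)
qed

theorem corollary2p5:
  fixes \<phi> :: "complex^2 \<Rightarrow> complex^2"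
  assumes "vec_polyaut \<phi>"
    and "\<forall>v. \<phi> (tau v) = tau (\<phi> v)"
  shows "\<exists>!\<Phi> :: complex^2^2 \<Rightarrow> complex^2^2.
           mat_polyaut \<Phi>
         \<and> (\<forall>A M. invertible A \<longrightarrow> A ** \<Phi> M ** matrix_inv A = \<Phi> (A ** M ** matrix_inv A))
         \<and> (\<forall>v. \<Phi> (diag2 v) = diag2 (\<phi> v))"
proof -
  have bij: "bij \<phi>" and pm: "vec_polymap \<phi>" and pmi: "vec_polymap (inv \<phi>)"
    using assms(1) by (auto simp: vec_polyaut_def)
  have fi: "\<phi> (inv \<phi> w) = w" for w using bij by (simp add: bij_is_surj surj_f_inv_f)
  have if_: "inv \<phi> (\<phi> v) = v" for v using bij by (simp add: bij_is_inj)
  have itau: "\<forall>w. inv \<phi> (tau w) = tau (inv \<phi> w)"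
  proof
    fix w
    have "inv \<phi> (tau w) = inv \<phi> (tau (\<phi> (inv \<phi> w)))" by (simp add: fi)
    also have "\<dots> = inv \<phi> (\<phi> (tau (inv \<phi> w)))" using assms(2) by simp
    also have "\<dots> = tau (inv \<phi> w)" by (rule if_)
    finally show "inv \<phi> (tau w) = tau (inv \<phi> w)" .
  qed
  obtain \<Phi> where F: "mat_polymap \<Phi>" "equivc \<Phi>" "\<forall>v. \<Phi> (diag2 v) = diag2 (\<phi> v)"
    using ext_map[OF pm assms(2)] by blast
  obtain \<Psi> where G: "mat_polymap \<Psi>" "equivc \<Psi>" "\<forall>v. \<Psi> (diag2 v) = diag2 (inv \<phi> v)"
    using ext_map[OF pmi itau] by blast
  have c1: "(\<lambda>M. \<Psi> (\<Phi> M)) = (\<lambda>M. M)"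
    by (rule agree[OF polymap_comp[OF F(1) G(1)] equivc_comp[OF F(2) G(2)] polymap_id equivc_id])
       (simp add: F(3) G(3) if_)
  have c2: "(\<lambda>M. \<Phi> (\<Psi> M)) = (\<lambda>M. M)"
    by (rule agree[OF polymap_comp[OF G(1) F(1)] equivc_comp[OF G(2) F(2)] polymap_id equivc_id])
       (simp add: F(3) G(3) fi)
  have o1: "\<Psi> \<circ> \<Phi> = id" using c1 by (simp add: comp_def id_def)
  have o2: "\<Phi> \<circ> \<Psi> = id" using c2 by (simp add: comp_def id_def)
  have bijF: "bij \<Phi>" by (rule o_bij[OF o1 o2])
  have invF: "inv \<Phi> = \<Psi>" by (rule inv_unique_comp[OF o2 o1])
  have aut: "mat_polyaut \<Phi>" using bijF F(1) G(1) invF by (simp add: mat_polyaut_def)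
  show ?thesis
  proof (rule ex1I[of _ \<Phi>])
    show "mat_polyaut \<Phi> \<and> (\<forall>A M. invertible A \<longrightarrow> A ** \<Phi> M ** matrix_inv A = \<Phi> (A ** M ** matrix_inv A))
         \<and> (\<forall>v. \<Phi> (diag2 v) = diag2 (\<phi> v))"
      using aut F(2,3) by (simp add: equivc_def)
  next
    fix \<Phi>' :: "complex^2^2 \<Rightarrow> complex^2^2"
    assume H: "mat_polyaut \<Phi>' \<and> (\<forall>A M. invertible A \<longrightarrow> A ** \<Phi>' M ** matrix_inv A = \<Phi>' (A ** M ** matrix_inv A))
         \<and> (\<forall>v. \<Phi>' (diag2 v) = diag2 (\<phi> v))"
    show "\<Phi>' = \<Phi>"
      by (rule agree) (use H F in \<open>auto simp: mat_polyaut_def equivc_def\<close>)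
  qed
qed

end
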